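(* Let $N,l$ be positive integers with $l<N$, let $\hat a(\xi)=\cos^{2N}(\xi/2)\sum_{j=0}^{l}\binom{N-1+j}{j}\sin^{2j}(\xi/2)$ be the type II pseudo spline mask of order $(N,l)$, and let $\phi$ be the pseudo spline of type II, $\hat\phi(\xi)=\prod_{j=1}^\infty\hat a(2^{-j}\xi)$. Let $C_1=2^{-(2l+2)}\sum_{j=l+1}^{N+l}\binom{N+l}{j}$. Let $K\subset[-\pi,\pi]$ be nonempty and such that there is $\xi_0\in K$ with $|\xi_0|=\max_{\xi\in K}|\xi|$, and let $k_0$ be a positive integer such that $2^{-k}C_1|\xi|^{2l+2}<\tfrac12$ for all $\xi\in K$ and all $k>k_0$. Then for all $\xi\in\mathbb R$, $$|\hat\phi(\xi)|\ge C_4\,\chi_K(\xi),\qquad C_4=\prod_{k=1}^{k_0}|\hat a(2^{-k}\xi_0)|\,\exp\!\big(-C_1 2^{-k_0+1}|\xi_0|^{2l+2}\big).$$ *)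

theory Defs
  imports "HOL-Analysis.Analysis"
begin

definition pseudo_mask :: "nat \<Rightarrow> nat \<Rightarrow> real \<Rightarrow> real" where
  "pseudo_mask N l \<xi> = (cos (\<xi>/2)) ^ (2*N) *
     (\<Sum>j=0..l. real ((N - 1 + j) choose j) * (sin (\<xi>/2)) ^ (2*j))"

definition pseudo_phi_hat :: "nat \<Rightarrow> nat \<Rightarrow> real \<Rightarrow> real" where
  "pseudo_phi_hat N l \<xi> = (\<Prod>j. pseudo_mask N l (\<xi> / 2 ^ (Suc j)))"

definition pseudo_C1 :: "nat \<Rightarrow> nat \<Rightarrow> real" where
  "pseudo_C1 N l = 2 powr (- real (2*l+2)) * (\<Sum>j=l+1..N+l. real ((N+l) choose j))"

end

theory Submission imports Defs begin

definition cc :: "nat \<Rightarrow> nat \<Rightarrow> real" where "cc N j = real ((N - 1 + j) choose j)"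
definition SS :: "nat \<Rightarrow> nat \<Rightarrow> real \<Rightarrow> real" where "SS N l y = (\<Sum>j=0..l. cc N j * y^j)"
definition SD :: "nat \<Rightarrow> nat \<Rightarrow> real \<Rightarrow> real" where "SD N l y = (\<Sum>j=0..l. cc N j * (real j * y^(j-1)))"
definition gg :: "nat \<Rightarrow> nat \<Rightarrow> real \<Rightarrow> real" where "gg N l y = (1-y)^N * SS N l y"

lemma cc_rec: assumes "N \<ge> 1" shows "real (Suc l) * cc N (Suc l) = real (N + l) * cc N l"
proof -
  have "Suc (N - 1 + l) * ((N - 1 + l) choose l) = (Suc (N - 1 + l) choose Suc l) * Suc l"
    by (rule Suc_times_binomial_eq)
  moreover have "Suc (N - 1 + l) = N + l" "N - 1 + Suc l = Suc (N - 1 + l)" using assms by auto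
  ultimately have "(N + l) * ((N - 1 + l) choose l) = ((N - 1 + Suc l) choose Suc l) * Suc l" by simp
  hence "real ((N + l) * ((N - 1 + l) choose l)) = real (((N - 1 + Suc l) choose Suc l) * Suc l)" by simp
  thus ?thesis unfolding cc_def by (metis of_nat_mult mult.commute)
qed

lemma T_ident: assumes "N \<ge> 1"
  shows "(1-y) * SD N l y - real N * SS N l y = - (real (N+l) * cc N l * y^l)"
proof (induction l)
  case 0
  then show ?case by (simp add: SD_def SS_def cc_def)
next
  case (Suc l)
  have SDs: "SD N (Suc l) y = SD N l y + cc N (Suc l) * (real (Suc l) * y^l)"
    by (simp add: SD_def)
  have SSs: "SS N (Suc l) y = SS N l y + cc N (Suc l) * y^(Suc l)"
    by (simp add: SS_def)
  have r: "real (Suc l) * cc N (Suc l) = real (N + l) * cc N l" using cc_rec assms by blast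
  have "(1-y) * SD N (Suc l) y - real N * SS N (Suc l) y
     = ((1-y) * SD N l y - real N * SS N l y) + (real (Suc l) * cc N (Suc l)) * y^l
        - (real (Suc l) + real N) * cc N (Suc l) * y^(Suc l)"
    unfolding SDs SSs by (simp add: algebra_simps)
  also have "\<dots> = - ((real (N + Suc l)) * cc N (Suc l) * y^(Suc l))"
    unfolding Suc.IH r by (simp add: algebra_simps)
  finally show ?case .
qed

lemma gg_deriv: assumes "N \<ge> 1"
  shows "(gg N l has_real_derivative (- (real (N+l) * cc N l * y^l * (1-y)^(N-1)))) (at y)"
proof -
  have dS: "(SS N l has_real_derivative SD N l y) (at y)"
    unfolding SS_def SD_def
    by (auto intro!: derivative_eq_intros DERIV_sum)
  have d: "(gg N l has_real_derivative (real N * (1-y)^(N-1) * (-1) * SS N l y + (1-y)^N * SD N l y)) (at y)"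
    unfolding gg_def
    by (rule derivative_eq_intros dS refl | simp)+
  have "real N * (1-y)^(N-1) * (-1) * SS N l y + (1-y)^N * SD N l y
      = (1-y)^(N-1) * ((1-y) * SD N l y - real N * SS N l y)"
  proof -
    have e: "(1-y)^N = (1-y)^(N-1) * (1-y)" using assms by (metis Suc_diff_le diff_Suc_1 power_Suc2)
    show ?thesis unfolding e by (simp only: algebra_simps)
  qed
  also have "\<dots> = (1-y)^(N-1) * (- (real (N+l) * cc N l * y^l))" unfolding T_ident[OF assms] ..
  also have "\<dots> = - (real (N+l) * cc N l * y^l * (1-y)^(N-1))" by (simp add: algebra_simps)
  finally have e2: "real N * (1-y)^(N-1) * (-1) * SS N l y + (1-y)^N * SD N l y
      = - (real (N+l) * cc N l * y^l * (1-y)^(N-1))" .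
  with d show ?thesis by simp
qed

lemma cc_nonneg: "cc N j \<ge> 0" by (simp add: cc_def)

lemma gg_mono: assumes "N \<ge> 1" "0 \<le> y1" "y1 \<le> y2" "y2 \<le> 1"
  shows "gg N l y2 \<le> gg N l y1"
proof (rule DERIV_nonpos_imp_nonincreasing[OF assms(3)])
  fix x assume "y1 \<le> x" "x \<le> y2"
  hence x: "0 \<le> x" "x \<le> 1" using assms by simp_all
  show "\<exists>d. (gg N l has_real_derivative d) (at x) \<and> d \<le> 0"
  proof (intro exI conjI)
    show "(gg N l has_real_derivative (- (real (N+l) * cc N l * x^l * (1-x)^(N-1)))) (at x)"
      by (rule gg_deriv[OF assms(1)])
    show "- (real (N+l) * cc N l * x^l * (1-x)^(N-1)) \<le> 0"
      using x cc_nonneg by (simp add: zero_le_mult_iff)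
  qed
qed

lemma gg0: "gg N l 0 = 1"
proof -
  have "SS N l 0 = (\<Sum>j\<in>{0..l}. if j = 0 then 1 else 0)"
    unfolding SS_def by (intro sum.cong) (auto simp: cc_def)
  also have "\<dots> = 1" by simp
  finally show ?thesis by (simp add: gg_def)
qed

lemma gg_lower: assumes "N \<ge> 1" "0 \<le> y" "y \<le> 1"
  shows "1 - gg N l y \<le> cc N (Suc l) * y^(Suc l)"
proof -
  let ?h = "\<lambda>y. gg N l y + cc N (Suc l) * y^(Suc l)"
  have "?h 0 \<le> ?h y"
  proof (rule DERIV_nonneg_imp_nondecreasing[OF assms(2)])
    fix x assume "0 \<le> x" "x \<le> y"
    hence x: "0 \<le> x" "x \<le> 1" using assms by simp_all
    have r: "real (Suc l) * cc N (Suc l) = real (N + l) * cc N l" using cc_rec assms by blast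
    show "\<exists>d. (?h has_real_derivative d) (at x) \<and> d \<ge> 0"
    proof (intro exI conjI)
      show "(?h has_real_derivative (- (real (N+l) * cc N l * x^l * (1-x)^(N-1)) + cc N (Suc l) * (real (Suc l) * x^l))) (at x)"
        by (rule derivative_eq_intros gg_deriv[OF assms(1)] refl | simp)+
      have p: "(1-x)^(N-1) \<le> 1" using x by (simp add: power_le_one)
      have "- (real (N+l) * cc N l * x^l * (1-x)^(N-1)) + cc N (Suc l) * (real (Suc l) * x^l)
          = (real (N+l) * cc N l * x^l) * (1 - (1-x)^(N-1))"
      proof -
        have r2: "cc N (Suc l) * (real (Suc l) * x^l) = real (N+l) * cc N l * x^l"
          by (metis r mult.commute mult.assoc)
        show ?thesis unfolding r2 by (simp add: algebra_simps)
      qed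
      also have "\<dots> \<ge> 0" using p x cc_nonneg by (simp add: zero_le_mult_iff)
      finally show "- (real (N+l) * cc N l * x^l * (1-x)^(N-1)) + cc N (Suc l) * (real (Suc l) * x^l) \<ge> 0" .
    qed
  qed
  thus ?thesis using gg0[of N l] by simp
qed

lemma gg_le1: assumes "N \<ge> 1" "0 \<le> y" "y \<le> 1" shows "gg N l y \<le> 1"
  using gg_mono[OF assms(1) order_refl assms(2,3), of l] gg0[of N l] by simp

lemma gg_nonneg: assumes "0 \<le> y" "y \<le> 1" shows "0 \<le> gg N l y"
  using assms cc_nonneg unfolding gg_def SS_def by (auto intro!: sum_nonneg mult_nonneg_nonneg)

lemma mask_gg: "pseudo_mask N l x = gg N l ((sin (x/2))^2)"
  unfolding pseudo_mask_def gg_def SS_def cc_def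
  by (simp add: power_mult cos_squared_eq)

lemma sin_sq_abs: "(sin (t::real))^2 = (sin \<bar>t\<bar>)^2"
  by (cases "t \<ge> 0") auto

lemma sin_sq_mono: assumes "\<bar>s\<bar> \<le> \<bar>t\<bar>" "\<bar>t\<bar> \<le> pi/2"
  shows "(sin s)^2 \<le> (sin t)^2"
proof -
  have a: "0 \<le> sin \<bar>s\<bar>" using assms by (intro sin_ge_zero) auto
  have b: "sin \<bar>s\<bar> \<le> sin \<bar>t\<bar>" using assms by (subst sin_mono_le_eq) auto
  show ?thesis unfolding sin_sq_abs[of s] sin_sq_abs[of t] by (rule power_mono[OF b a])
qed

lemma sin_sq_01: "0 \<le> (sin (t::real))^2" "(sin t)^2 \<le> 1"
  by (simp, metis abs_sin_le_one abs_square_le_1)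

lemma mask_nonneg: "0 \<le> pseudo_mask N l x"
  unfolding mask_gg by (rule gg_nonneg) (simp_all add: sin_sq_01)

lemma mask_le1: "N \<ge> 1 \<Longrightarrow> pseudo_mask N l x \<le> 1"
  unfolding mask_gg by (rule gg_le1) (simp_all add: sin_sq_01)

lemma mask_mono: assumes "N \<ge> 1" "\<bar>x1\<bar> \<le> \<bar>x2\<bar>" "\<bar>x2\<bar> \<le> pi"
  shows "pseudo_mask N l x2 \<le> pseudo_mask N l x1"
  unfolding mask_gg
proof (rule gg_mono[OF assms(1)])
  show "(sin (x1/2))^2 \<le> (sin (x2/2))^2" by (rule sin_sq_mono) (use assms(2,3) in simp_all)
qed (simp_all add: sin_sq_01)

lemma cc_le_B: assumes "N \<ge> 1" shows "cc N (Suc l) \<le> (\<Sum>j=l+1..N+l. real ((N+l) choose j))"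
proof -
  have "cc N (Suc l) = real ((N+l) choose (l+1))" unfolding cc_def using assms
    by (simp add: Suc_diff_le)
  also have "\<dots> \<le> (\<Sum>j=l+1..N+l. real ((N+l) choose j))"
    by (rule member_le_sum) (use assms in auto)
  finally show ?thesis .
qed

lemma t1: "(sin ((x::real)/2))^2 \<le> (x/2)^2"
    using power_mono[OF abs_sin_x_le_abs_x[of "x/2"] abs_ge_zero, of 2] by (simp add: power_divide)
lemma t2: "(2::real) powr (- real (2*l+2)) = inverse (2^(2*l+2))"
        by (subst powr_minus, subst powr_realpow) simp_all
lemma t3: "(((x::real)/2)^2)^(Suc l) = \<bar>x\<bar>^(2*l+2) / 2^(2*l+2)"
    proof -
      have "((x/2)^2)^(Suc l) = (x/2)^(2*Suc l)" by (simp only: power_mult)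
      also have "\<dots> = \<bar>x/2\<bar>^(2*Suc l)" by (rule power_even_abs[symmetric]) simp
      also have "\<dots> = \<bar>x\<bar>^(2*l+2) / 2^(2*l+2)" by (simp add: power_divide)
      finally show ?thesis .
    qed

lemma mask_lower: assumes "N \<ge> 1"
  shows "1 - pseudo_mask N l x \<le> pseudo_C1 N l * \<bar>x\<bar>^(2*l+2)"
proof -
  define B where "B = (\<Sum>j=l+1..N+l. real ((N+l) choose j))"
  have "1 - pseudo_mask N l x \<le> cc N (Suc l) * ((sin (x/2))^2)^(Suc l)"
    unfolding mask_gg by (rule gg_lower[OF assms]) (simp_all add: sin_sq_01)
  also have "\<dots> \<le> B * ((x/2)^2)^(Suc l)"
  proof (rule mult_mono)
    show "cc N (Suc l) \<le> B" unfolding B_def by (rule cc_le_B[OF assms])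
    show "((sin (x/2))^2)^(Suc l) \<le> ((x/2)^2)^(Suc l)" by (rule power_mono[OF t1]) simp
    show "0 \<le> B" unfolding B_def by (rule sum_nonneg) simp
    show "0 \<le> ((sin (x/2))^2)^(Suc l)" by simp
  qed
  also have "\<dots> = B * (\<bar>x\<bar>^(2*l+2) / 2^(2*l+2))" by (simp only: t3)
  also have "\<dots> = (inverse (2^(2*l+2)) * B) * \<bar>x\<bar>^(2*l+2)"
    by (simp only: divide_inverse mult_ac)
  also have "\<dots> = pseudo_C1 N l * \<bar>x\<bar>^(2*l+2)"
    unfolding pseudo_C1_def B_def t2 ..
  finally show ?thesis .
qed

lemma exp_bound: assumes "0 \<le> (t::real)" "t \<le> 1/2" shows "exp (-2*t) \<le> 1 - t"
proof -
  have "- t - 2 * t^2 \<le> ln (1 - t)" by (rule ln_one_minus_pos_lower_bound[OF assms])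
  moreover have "-2*t \<le> - t - 2 * t^2"
  proof -
    have "t*(2*t) \<le> t*1" using assms by (intro mult_left_mono) auto
    thus ?thesis by (simp add: power2_eq_square mult_ac)
  qed
  ultimately have "-2*t \<le> ln (1-t)" by linarith
  hence "exp (-2*t) \<le> exp (ln (1-t))" by simp
  thus ?thesis using assms by simp
qed

lemma geom_sum: "m \<le> Suc n \<Longrightarrow> (\<Sum>i=m..n. (1/2::real)^(Suc i)) = (1/2)^m - (1/2)^(Suc n)"
proof (induction n)
  case 0
  then show ?case by (cases m) auto
next
  case (Suc n)
  show ?case
  proof (cases "m = Suc (Suc n)")
    case True then show ?thesis by simp
  next
    case False
    hence "m \<le> Suc n" using Suc.prems by simp
    hence "{m..Suc n} = insert (Suc n) {m..n}" by auto
    hence "(\<Sum>i=m..Suc n. (1/2::real)^(Suc i)) = (1/2)^(Suc (Suc n)) + (\<Sum>i=m..n. (1/2::real)^(Suc i))"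
      by simp
    also have "\<dots> = (1/2)^m - (1/2)^(Suc (Suc n))" using Suc.IH[OF \<open>m \<le> Suc n\<close>] by simp
    finally show ?thesis .
  qed
qed

lemma powr_half: "(2::real) powr (- real k) = (1/2)^k"
  by (simp add: powr_minus powr_realpow power_one_over inverse_eq_divide)

lemma powr_half1: "(2::real) powr (- real k + 1) = 2 * (1/2)^k"
  by (simp add: powr_diff powr_realpow power_one_over)

lemma C1_nonneg: "0 \<le> pseudo_C1 N l"
  unfolding pseudo_C1_def by (intro mult_nonneg_nonneg sum_nonneg) auto

theorem mainTheorem6:
  fixes N l k0 :: nat and K :: "real set" and \<xi>0 :: real
  assumes "0 < l" and "l < N"
    and "K \<subseteq> {-pi..pi}" and "K \<noteq> {}"
    and "\<xi>0 \<in> K" and "\<forall>\<xi>\<in>K. \<bar>\<xi>\<bar> \<le> \<bar>\<xi>0\<bar>"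
    and "0 < k0"
    and "\<forall>\<xi>\<in>K. \<forall>k>k0. 2 powr (- real k) * pseudo_C1 N l * \<bar>\<xi>\<bar> ^ (2*l+2) < 1/2"
  shows "\<forall>\<xi>::real. \<bar>pseudo_phi_hat N l \<xi>\<bar> \<ge>
     ((\<Prod>k=1..k0. \<bar>pseudo_mask N l (2 powr (- real k) * \<xi>0)\<bar>) *
       exp (- pseudo_C1 N l * 2 powr (- real k0 + 1) * \<bar>\<xi>0\<bar> ^ (2*l+2)))
     * indicator K \<xi>"
proof
  fix \<xi> :: real
  have N1: "N \<ge> 1" using assms(2) by simp
  define C1 where "C1 = pseudo_C1 N l"
  have C1: "0 \<le> C1" unfolding C1_def by (rule C1_nonneg)
  define P1 where "P1 = (\<Prod>k=1..k0. \<bar>pseudo_mask N l (2 powr (- real k) * \<xi>0)\<bar>)"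
  define P2 where "P2 = exp (- pseudo_C1 N l * 2 powr (- real k0 + 1) * \<bar>\<xi>0\<bar> ^ (2*l+2))"
  show "\<bar>pseudo_phi_hat N l \<xi>\<bar> \<ge> (P1 * P2) * indicator K \<xi>"
  proof (cases "\<xi> \<in> K")
    case False
    then show ?thesis by simp
  next
    case True
    have xle: "\<bar>\<xi>\<bar> \<le> \<bar>\<xi>0\<bar>" using assms(6) True by blast
    have "\<xi>0 \<in> {-pi..pi}" using assms(3,5) by blast
    hence x0pi: "\<bar>\<xi>0\<bar> \<le> pi" by (auto simp: abs_le_iff)
    define f where "f j = pseudo_mask N l (\<xi> / 2 ^ (Suc j))" for j
    define E where "E = C1 * \<bar>\<xi>\<bar>^(2*l+2)"
    have E0: "0 \<le> E" unfolding E_def using C1 by simp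
    have f01: "0 \<le> f j" "f j \<le> 1" for j unfolding f_def using mask_nonneg mask_le1[OF N1] by auto
    have fE: "1 - f j \<le> E * (1/2)^(Suc j)" for j
    proof -
      have "1 - f j \<le> C1 * \<bar>\<xi> / 2 ^ (Suc j)\<bar>^(2*l+2)"
        unfolding f_def C1_def by (rule mask_lower[OF N1])
      also have "\<bar>\<xi> / 2 ^ (Suc j)\<bar>^(2*l+2) = \<bar>\<xi>\<bar>^(2*l+2) * ((1/2)^(Suc j))^(2*l+2)"
        by (simp add: abs_divide power_divide power_one_over)
      finally have L: "1 - f j \<le> C1 * (\<bar>\<xi>\<bar>^(2*l+2) * ((1/2::real)^(Suc j))^(2*l+2))" .
      have "((1/2::real)^(Suc j))^(2*l+2) \<le> ((1/2)^(Suc j))^1"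
        by (rule power_decreasing) (simp_all add: power_le_one order_trans[OF power_le_one])
      hence "C1 * (\<bar>\<xi>\<bar>^(2*l+2) * ((1/2::real)^(Suc j))^(2*l+2)) \<le> C1 * (\<bar>\<xi>\<bar>^(2*l+2) * (1/2)^(Suc j))"
        using C1 by (intro mult_left_mono) simp_all
      with L show ?thesis unfolding E_def by (simp add: mult_ac)
    qed
    have summ: "summable (\<lambda>j. norm (f j - 1))"
    proof (rule summable_comparison_test')
      show "summable (\<lambda>j. E * (1/2::real)^j)" by (intro summable_mult summable_geometric) simp
      fix j :: nat
      have "norm (norm (f j - 1)) = 1 - f j" using f01[of j] by simp
      also have "\<dots> \<le> E * (1/2)^(Suc j)" by (rule fE)
      also have "\<dots> \<le> E * (1/2)^j" using E0 by (intro mult_left_mono) simp_all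
      finally show "norm (norm (f j - 1)) \<le> E * (1/2)^j" .
    qed
    have cp: "convergent_prod f"
      by (rule abs_convergent_prod_imp_convergent_prod[OF summable_imp_abs_convergent_prod[OF summ]])
    have lim: "(\<lambda>n. \<Prod>i\<le>n. f i) \<longlonglongrightarrow> pseudo_phi_hat N l \<xi>"
      using convergent_prod_LIMSEQ[OF cp] unfolding pseudo_phi_hat_def f_def by simp
    have P1le: "P1 \<le> (\<Prod>i<k0. f i)"
    proof -
      have "P1 = (\<Prod>i<k0. \<bar>pseudo_mask N l (2 powr (- real (Suc i)) * \<xi>0)\<bar>)"
        unfolding P1_def by (simp add: prod.atLeast1_atMost_eq)
      also have "\<dots> \<le> (\<Prod>i<k0. f i)"
      proof (rule prod_mono, rule conjI)
        fix i assume "i \<in> {..<k0}"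
        show "0 \<le> \<bar>pseudo_mask N l (2 powr (- real (Suc i)) * \<xi>0)\<bar>" by simp
        have e: "2 powr (- real (Suc i)) * \<xi>0 = \<xi>0 / 2^(Suc i)"
          unfolding powr_half by (simp add: power_one_over)
        have a1: "\<bar>\<xi> / 2^(Suc i)\<bar> \<le> \<bar>\<xi>0 / 2^(Suc i)\<bar>" using xle by (simp add: abs_divide divide_right_mono)
        have a2: "\<bar>\<xi>0 / 2^(Suc i)\<bar> \<le> \<bar>\<xi>0\<bar>"
        proof -
          have "(1::real) \<le> 2^Suc i" by (rule one_le_power) simp
          thus ?thesis using divide_left_mono[of 1 "2^Suc i" "\<bar>\<xi>0\<bar>"] by (simp add: abs_divide)
        qed
        show "\<bar>pseudo_mask N l (2 powr (- real (Suc i)) * \<xi>0)\<bar> \<le> f i"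
          unfolding e f_def using mask_nonneg mask_mono[OF N1 a1 order.trans[OF a2 x0pi]] by simp
      qed
      finally show ?thesis .
    qed
    have P2le: "P2 \<le> (\<Prod>i=k0..n. f i)" for n
    proof -
      define t where "t i = E * (1/2::real)^(Suc i)" for i
      have t0: "0 \<le> t i" for i unfolding t_def using E0 by simp
      have th: "t i \<le> 1/2" if "k0 \<le> i" for i
      proof -
        have "Suc i > k0" using that by simp
        hence "2 powr (- real (Suc i)) * pseudo_C1 N l * \<bar>\<xi>\<bar> ^ (2*l+2) < 1/2"
          using assms(8) True by blast
        thus ?thesis unfolding t_def E_def C1_def powr_half by (simp add: mult_ac)
      qed
      have "(\<Prod>i=k0..n. exp (-2 * t i)) \<le> (\<Prod>i=k0..n. f i)"
      proof (rule prod_mono, rule conjI)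
        fix i assume "i \<in> {k0..n}"
        show "0 \<le> exp (-2 * t i)" by simp
        have "exp (-2 * t i) \<le> 1 - t i" using exp_bound t0 th \<open>i \<in> {k0..n}\<close> by simp
        also have "\<dots> \<le> f i" using fE[of i] unfolding t_def by simp
        finally show "exp (-2 * t i) \<le> f i" .
      qed
      moreover have "(\<Prod>i=k0..n. exp (-2 * t i)) = exp (-2 * E * (\<Sum>i=k0..n. (1/2)^(Suc i)))"
        by (simp add: exp_sum[symmetric] sum_distrib_left t_def mult_ac)
      moreover have S: "(\<Sum>i=k0..n. (1/2::real)^(Suc i)) \<le> (1/2)^k0"
      proof (cases "k0 \<le> Suc n")
        case True then show ?thesis using geom_sum[OF True] by simp
      next
        case False then show ?thesis by simp
      qed
      moreover have "P2 \<le> exp (-2 * E * (1/2)^k0)"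
      proof -
        have "C1 * \<bar>\<xi>\<bar>^(2*l+2) \<le> C1 * \<bar>\<xi>0\<bar>^(2*l+2)"
          using C1 xle by (intro mult_left_mono power_mono) simp_all
        hence "(C1 * \<bar>\<xi>\<bar>^(2*l+2)) * (2 * (1/2)^k0) \<le> (C1 * \<bar>\<xi>0\<bar>^(2*l+2)) * (2 * (1/2)^k0)"
          by (rule mult_right_mono) simp
        hence "2 * E * (1/2)^k0 \<le> C1 * (2 * (1/2)^k0) * \<bar>\<xi>0\<bar>^(2*l+2)"
          unfolding E_def by (simp add: mult_ac)
        thus ?thesis unfolding P2_def powr_half1 C1_def by simp
      qed
      moreover have "exp (-2 * E * (1/2)^k0) \<le> exp (-2 * E * (\<Sum>i=k0..n. (1/2)^(Suc i)))"
        using mult_left_mono[OF S E0] by simp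
      ultimately show ?thesis by linarith
    qed
    have "P1 * P2 \<le> pseudo_phi_hat N l \<xi>"
    proof (rule LIMSEQ_le_const[OF lim], intro exI allI impI)
      fix n assume "k0 \<le> n"
      hence U: "{..n} = {..<k0} \<union> {k0..n}" by auto
      have "(\<Prod>i\<le>n. f i) = (\<Prod>i<k0. f i) * (\<Prod>i=k0..n. f i)"
        unfolding U by (rule prod.union_disjoint) auto
      moreover have "0 \<le> P2" unfolding P2_def by simp
      moreover have "0 \<le> (\<Prod>i<k0. f i)" using f01 by (simp add: prod_nonneg)
      ultimately show "P1 * P2 \<le> (\<Prod>i\<le>n. f i)"
        using P1le P2le[of n] by (simp add: mult_mono)
    qed
    then show ?thesis using True by simp
  qed
qed

end
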